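(* Let $S$ be a semiring satisfying the standing assumptions below, and let $V$ and $W$ be finitely generated semimodules over $S$. If $T: V \to W$ is a surjective linear transformation, then $T$ is invertible (injective and surjective) if and only if $T$ preserves dimension, i.e. $\dim(T(U)) = \dim(U)$ for every subsemimodule $U$ of $V$.
   Context: A semiring $(S,+,\cdot)$ here means: $(S,+)$ is a commutative monoid with zero $0$, $(S,\cdot)$ is a commutative monoid with identity $1$, multiplication distributes over addition, and $0$ is absorbing. Standing assumptions on $S$: $S$ is additively idempotent ($a+a=a$), multiplicatively cancellative (for every nonzero $a$, $ba=ca$ implies $b=c$), and additively unit irreducible (if $a+b$ is a unit then $a$ or $b$ is a unit). A semimodule over $S$ is a nonempty subset of some $M_{m\times n}(S)$ closed under addition and scalar multiplication; a subsemimodule is a semimodule contained in another; finitely generated means equal to the set of $S$-linear combinations of a finite subset. A basis is a linearly independent spanning set (linearly independent: no element lies in the span of the others); the dimension $\dim$ of a finitely generated semimodule is the common cardinality of its bases. All semimodules considered in the paper are finitely generated. A linear transformation satisfies $T(\alpha x+\beta y)=\alpha T(x)+\beta T(y)$. *)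

theory Defs
  imports Main
begin

(* Elements of M_{m x n}(S) are represented as functions 'i \<Rightarrow> 'a on a finite
   index type 'i (e.g. 'i = rows \<times> columns); operations are entrywise. *)

definition vadd :: "('i \<Rightarrow> 'a::plus) \<Rightarrow> ('i \<Rightarrow> 'a) \<Rightarrow> ('i \<Rightarrow> 'a)" where
  "vadd x y = (\<lambda>i. x i + y i)"

definition smul :: "'a::times \<Rightarrow> ('i \<Rightarrow> 'a) \<Rightarrow> ('i \<Rightarrow> 'a)" where
  "smul c x = (\<lambda>i. c * x i)"

definition is_unit_sr :: "'a::{times,one} \<Rightarrow> bool" where
  "is_unit_sr a \<longleftrightarrow> (\<exists>b. a * b = 1)"

definition standing_semiring :: "'a::{comm_semiring_0, comm_monoid_mult} itself \<Rightarrow> bool" where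
  "standing_semiring _ \<longleftrightarrow>
     (\<forall>a::'a. a + a = a) \<and>
     (\<forall>a b c::'a. a \<noteq> 0 \<longrightarrow> b * a = c * a \<longrightarrow> b = c) \<and>
     (\<forall>a b::'a. is_unit_sr (a + b) \<longrightarrow> is_unit_sr a \<or> is_unit_sr b)"

definition semimodule :: "('i \<Rightarrow> 'a::{comm_semiring_0, comm_monoid_mult}) set \<Rightarrow> bool" where
  "semimodule V \<longleftrightarrow> V \<noteq> {} \<and> (\<forall>x\<in>V. \<forall>y\<in>V. vadd x y \<in> V) \<and> (\<forall>c. \<forall>x\<in>V. smul c x \<in> V)"

definition span_sr :: "('i \<Rightarrow> 'a::{comm_semiring_0, comm_monoid_mult}) set \<Rightarrow> ('i \<Rightarrow> 'a) set" where
  "span_sr A = {x. \<exists>B c. finite B \<and> B \<subseteq> A \<and> x = (\<lambda>i. \<Sum>b\<in>B. c b * b i)}"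

definition fin_gen :: "('i \<Rightarrow> 'a::{comm_semiring_0, comm_monoid_mult}) set \<Rightarrow> bool" where
  "fin_gen V \<longleftrightarrow> (\<exists>A. finite A \<and> A \<subseteq> V \<and> span_sr A = V)"

definition lin_indep_sr :: "('i \<Rightarrow> 'a::{comm_semiring_0, comm_monoid_mult}) set \<Rightarrow> bool" where
  "lin_indep_sr A \<longleftrightarrow> (\<forall>a\<in>A. a \<notin> span_sr (A - {a}))"

definition basis_sr :: "('i \<Rightarrow> 'a::{comm_semiring_0, comm_monoid_mult}) set \<Rightarrow> ('i \<Rightarrow> 'a) set \<Rightarrow> bool" where
  "basis_sr B V \<longleftrightarrow> B \<subseteq> V \<and> lin_indep_sr B \<and> span_sr B = V"

definition dim_sr :: "('i \<Rightarrow> 'a::{comm_semiring_0, comm_monoid_mult}) set \<Rightarrow> nat" where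
  "dim_sr V = (SOME n. \<exists>B. basis_sr B V \<and> finite B \<and> card B = n)"

definition linear_sr :: "('i \<Rightarrow> 'a::{comm_semiring_0, comm_monoid_mult}) set \<Rightarrow> ('j \<Rightarrow> 'a) set
     \<Rightarrow> (('i \<Rightarrow> 'a) \<Rightarrow> ('j \<Rightarrow> 'a)) \<Rightarrow> bool" where
  "linear_sr V W T \<longleftrightarrow> (\<forall>x\<in>V. T x \<in> W) \<and>
     (\<forall>\<alpha> \<beta>. \<forall>x\<in>V. \<forall>y\<in>V. T (vadd (smul \<alpha> x) (smul \<beta> y)) = vadd (smul \<alpha> (T x)) (smul \<beta> (T y)))"

end

theory Submission
  imports Defs
begin

lemma smul1: "smul (1::'a::{comm_semiring_0,comm_monoid_mult}) x = x" by (simp add: smul_def)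

lemma sum_in_V:
  assumes "semimodule V" "finite F" "F \<subseteq> V"
  shows "(\<lambda>i. \<Sum>b\<in>F. c b * b i) \<in> V"
  using assms(2,3)
proof (induction F rule: finite_induct)
  case empty
  from assms(1) obtain x where "x \<in> V" unfolding semimodule_def by auto
  then have "smul 0 x \<in> V" using assms(1) unfolding semimodule_def by auto
  moreover have "smul 0 x = (\<lambda>i. 0)" by (simp add: smul_def)
  ultimately show ?case by simp
next
  case (insert b F)
  then have "vadd (smul (c b) b) (\<lambda>i. \<Sum>b\<in>F. c b * b i) \<in> V"
    using assms(1) unfolding semimodule_def by auto
  then show ?case using insert by (simp add: vadd_def smul_def)
qed

lemma span_sub:
  assumes "semimodule V" "B \<subseteq> V"
  shows "span_sr B \<subseteq> V"
proof
  fix x assume "x \<in> span_sr B"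
  then obtain F c where "finite F" "F \<subseteq> B" "x = (\<lambda>i. \<Sum>b\<in>F. c b * b i)"
    unfolding span_sr_def by blast
  then show "x \<in> V" using sum_in_V[OF assms(1), of F c] assms(2) by blast
qed

lemma span_intro:
  assumes "finite F" "F \<subseteq> A" "x = (\<lambda>i. \<Sum>b\<in>F. c b * b i)"
  shows "x \<in> span_sr A"
  unfolding span_sr_def using assms by (intro CollectI exI conjI)

lemma span_zero: "(\<lambda>i. 0) \<in> span_sr B"
  unfolding span_sr_def by (rule CollectI, rule exI[of _ "{}"]) simp

locale linT =
  fixes V :: "('i \<Rightarrow> 'a::{comm_semiring_0, comm_monoid_mult}) set"
    and W :: "('j \<Rightarrow> 'a) set"
    and T :: "('i \<Rightarrow> 'a) \<Rightarrow> ('j \<Rightarrow> 'a)"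
  assumes sm: "semimodule V" and lin: "linear_sr V W T"
begin

lemma T0: "T (\<lambda>i. 0) = (\<lambda>i. 0)"
proof -
  from sm obtain x where x: "x \<in> V" unfolding semimodule_def by auto
  have "T (vadd (smul 0 x) (smul 0 x)) = vadd (smul 0 (T x)) (smul 0 (T x))"
    using lin x unfolding linear_sr_def by blast
  moreover have "vadd (smul 0 x) (smul 0 x) = (\<lambda>i. 0)" by (simp add: vadd_def smul_def)
  moreover have "vadd (smul 0 (T x)) (smul 0 (T x)) = (\<lambda>i. 0)" by (simp add: vadd_def smul_def)
  ultimately show ?thesis by simp
qed

lemma Tadd: "x \<in> V \<Longrightarrow> y \<in> V \<Longrightarrow> T (vadd x y) = vadd (T x) (T y)"
proof -
  assume xy: "x \<in> V" "y \<in> V"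
  have "T (vadd (smul 1 x) (smul 1 y)) = vadd (smul 1 (T x)) (smul 1 (T y))"
    using lin xy unfolding linear_sr_def by blast
  then show ?thesis by (simp only: smul1)
qed

lemma Tsmul: "x \<in> V \<Longrightarrow> T (smul c x) = smul c (T x)"
proof -
  assume x: "x \<in> V"
  have "T (vadd (smul c x) (smul 0 x)) = vadd (smul c (T x)) (smul 0 (T x))"
    using lin x unfolding linear_sr_def by blast
  moreover have "vadd (smul c x) (smul 0 x) = smul c x" by (simp add: vadd_def smul_def)
  moreover have "vadd (smul c (T x)) (smul 0 (T x)) = smul c (T x)" by (simp add: vadd_def smul_def)
  ultimately show ?thesis by simp
qed

lemma Tsum:
  assumes "finite F" "F \<subseteq> V"
  shows "T (\<lambda>i. \<Sum>b\<in>F. c b * b i) = (\<lambda>i. \<Sum>b\<in>F. c b * T b i)"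
  using assms
proof (induction F rule: finite_induct)
  case empty
  then show ?case using T0 by simp
next
  case (insert b F)
  have eq: "(\<lambda>i. \<Sum>b\<in>insert b F. c b * b i) = vadd (smul (c b) b) (\<lambda>i. \<Sum>b\<in>F. c b * b i)"
    using insert by (simp add: vadd_def smul_def)
  have bV: "b \<in> V" "smul (c b) b \<in> V" using insert sm unfolding semimodule_def by auto
  have rV: "(\<lambda>i. \<Sum>b\<in>F. c b * b i) \<in> V" using sum_in_V[OF sm] insert by auto
  have "T (\<lambda>i. \<Sum>b\<in>insert b F. c b * b i) = vadd (smul (c b) (T b)) (T (\<lambda>i. \<Sum>b\<in>F. c b * b i))"
    unfolding eq Tadd[OF bV(2) rV] Tsmul[OF bV(1)] by (rule refl)
  also have "\<dots> = vadd (smul (c b) (T b)) (\<lambda>i. \<Sum>b\<in>F. c b * T b i)"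
    using insert by simp
  also have "\<dots> = (\<lambda>i. \<Sum>b\<in>insert b F. c b * T b i)"
    using insert(1,2) by (simp add: vadd_def smul_def)
  finally show ?case .
qed


lemma span_image:
  assumes inj: "inj_on T V" and BV: "B \<subseteq> V"
  shows "span_sr (T ` B) = T ` span_sr B"
proof
  show "span_sr (T ` B) \<subseteq> T ` span_sr B"
  proof
    fix y assume "y \<in> span_sr (T ` B)"
    then obtain F' c where F': "finite F'" "F' \<subseteq> T ` B" "y = (\<lambda>i. \<Sum>b\<in>F'. c b * b i)"
      unfolding span_sr_def by blast
    obtain F where F: "F \<subseteq> B" "F' = T ` F" using F'(2) by (meson subset_image_iff)
    have injF: "inj_on T F" using inj F(1) BV by (meson inj_on_subset subset_trans)
    have finF: "finite F" using F'(1) F(2) injF finite_imageD by blast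
    have "y = (\<lambda>i. \<Sum>b\<in>F. c (T b) * T b i)"
    proof
      fix i
      show "y i = (\<Sum>b\<in>F. c (T b) * T b i)"
        unfolding F'(3) F(2) using sum.reindex[OF injF, of "\<lambda>b. c b * b i"] by simp
    qed
    also have "\<dots> = T (\<lambda>i. \<Sum>b\<in>F. c (T b) * b i)"
      using Tsum[OF finF] F(1) BV by auto
    finally show "y \<in> T ` span_sr B" by (rule image_eqI[OF _ span_intro[OF finF F(1) refl]])
  qed
next
  show "T ` span_sr B \<subseteq> span_sr (T ` B)"
  proof
    fix y assume "y \<in> T ` span_sr B"
    then obtain F c where F: "finite F" "F \<subseteq> B" "y = T (\<lambda>i. \<Sum>b\<in>F. c b * b i)"
      unfolding span_sr_def by blast
    have injF: "inj_on T F" using inj F(2) BV by (meson inj_on_subset subset_trans)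
    have "y = (\<lambda>i. \<Sum>b\<in>F. c b * T b i)" using Tsum[OF F(1)] F(2,3) BV by auto
    also have "\<dots> = (\<lambda>i. \<Sum>b'\<in>T ` F. c (the_inv_into F T b') * b' i)"
    proof
      fix i
      have "(\<Sum>b'\<in>T ` F. c (the_inv_into F T b') * b' i) = (\<Sum>b\<in>F. c (the_inv_into F T (T b)) * T b i)"
        using sum.reindex[OF injF, of "\<lambda>b'. c (the_inv_into F T b') * b' i"] by simp
      also have "\<dots> = (\<Sum>b\<in>F. c b * T b i)"
        by (rule sum.cong[OF refl]) (simp add: the_inv_into_f_f[OF injF])
      finally show "(\<Sum>b\<in>F. c b * T b i) = (\<Sum>b'\<in>T ` F. c (the_inv_into F T b') * b' i)" by simp
    qed
    finally show "y \<in> span_sr (T ` B)" by (rule span_intro[rotated 2]) (use F in auto)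
  qed
qed

lemma indep_image:
  assumes inj: "inj_on T V" and BV: "B \<subseteq> V"
  shows "lin_indep_sr (T ` B) \<longleftrightarrow> lin_indep_sr B"
proof -
  have "T a \<in> span_sr (T ` B - {T a}) \<longleftrightarrow> a \<in> span_sr (B - {a})" if a: "a \<in> B" for a
  proof -
    have "T ` B - {T a} = T ` (B - {a})" using inj BV a by (auto simp: inj_on_def)
    moreover have "B - {a} \<subseteq> V" using BV by blast
    ultimately have "span_sr (T ` B - {T a}) = T ` span_sr (B - {a})"
      using span_image[OF inj] by simp
    moreover have "span_sr (B - {a}) \<subseteq> V" using span_sub[OF sm] BV by blast
    moreover have "a \<in> V" using a BV by blast
    ultimately show ?thesis using inj_on_image_mem_iff[OF inj] by simp
  qed
  then show ?thesis unfolding lin_indep_sr_def by auto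
qed

lemma basis_image:
  assumes inj: "inj_on T V" and UV: "U \<subseteq> V" and BU: "B \<subseteq> U"
  shows "basis_sr (T ` B) (T ` U) \<longleftrightarrow> basis_sr B U"
proof -
  have BV: "B \<subseteq> V" using UV BU by auto
  have sp: "span_sr B \<subseteq> V" using span_sub[OF sm BV] .
  have "span_sr (T ` B) = T ` U \<longleftrightarrow> span_sr B = U"
    unfolding span_image[OF inj BV] using inj_on_image_eq_iff[OF inj sp UV] .
  then show ?thesis unfolding basis_sr_def using indep_image[OF inj BV] BU by auto
qed

lemma dim_image:
  assumes inj: "inj_on T V" and UV: "U \<subseteq> V"
  shows "dim_sr (T ` U) = dim_sr U"
proof -
  have "(\<exists>B'. basis_sr B' (T ` U) \<and> finite B' \<and> card B' = n) \<longleftrightarrow>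
        (\<exists>B. basis_sr B U \<and> finite B \<and> card B = n)" for n
  proof
    assume "\<exists>B'. basis_sr B' (T ` U) \<and> finite B' \<and> card B' = n"
    then obtain B' where B': "basis_sr B' (T ` U)" "finite B'" "card B' = n" by blast
    then have "B' \<subseteq> T ` U" unfolding basis_sr_def by blast
    then obtain B where B: "B \<subseteq> U" "B' = T ` B" by (meson subset_image_iff)
    have injB: "inj_on T B" using inj B(1) UV by (meson inj_on_subset subset_trans)
    have "finite B" using B' B injB finite_imageD by blast
    moreover have "card B = n" using B' B injB card_image by metis
    moreover have "basis_sr B U" using B' B basis_image[OF inj UV B(1)] by simp
    ultimately show "\<exists>B. basis_sr B U \<and> finite B \<and> card B = n" by blast
  next
    assume "\<exists>B. basis_sr B U \<and> finite B \<and> card B = n"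
    then obtain B where B: "basis_sr B U" "finite B" "card B = n" by blast
    have BU: "B \<subseteq> U" using B unfolding basis_sr_def by blast
    have injB: "inj_on T B" using inj BU UV by (meson inj_on_subset subset_trans)
    have "basis_sr (T ` B) (T ` U)" using basis_image[OF inj UV BU] B by simp
    moreover have "card (T ` B) = n" using card_image[OF injB] B by simp
    ultimately show "\<exists>B'. basis_sr B' (T ` U) \<and> finite B' \<and> card B' = n" using B by blast
  qed
  then show ?thesis unfolding dim_sr_def by simp
qed

end

lemma canc:
  assumes "standing_semiring TYPE('a::{comm_semiring_0, comm_monoid_mult})"
    and "(z::'a) \<noteq> 0" "a * z = b * z"
  shows "a = b"
  using assms unfolding standing_semiring_def by blast

lemma unit_sum:
  assumes st: "standing_semiring TYPE('a::{comm_semiring_0, comm_monoid_mult})"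
    and nz: "(0::'a) \<noteq> 1"
    and fin: "finite F"
  shows "is_unit_sr (sum (f::'b \<Rightarrow> 'a) F) \<Longrightarrow> \<exists>b\<in>F. is_unit_sr (f b)"
  using fin
proof (induction F rule: finite_induct)
  case empty
  then show ?case using nz by (simp add: is_unit_sr_def)
next
  case (insert b F)
  then have "is_unit_sr (f b + sum f F)" by simp
  then have "is_unit_sr (f b) \<or> is_unit_sr (sum f F)"
    using st unfolding standing_semiring_def by blast
  then show ?case using insert by blast
qed

lemma span_empty: "span_sr {} = {\<lambda>i. 0}"
  unfolding span_sr_def by auto

lemma span_single: "span_sr {z} = range (\<lambda>c. smul c z)"
proof
  show "span_sr {z} \<subseteq> range (\<lambda>c. smul c z)"
  proof
    fix x assume "x \<in> span_sr {z}"
    then obtain B c where B: "B \<subseteq> {z}" "x = (\<lambda>i. \<Sum>b\<in>B. c b * b i)"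
      unfolding span_sr_def by blast
    from B(1) have "B = {} \<or> B = {z}" by blast
    then show "x \<in> range (\<lambda>c. smul c z)"
    proof
      assume "B = {}"
      then have "x = smul 0 z" using B(2) by (simp add: smul_def)
      then show ?thesis by blast
    next
      assume "B = {z}"
      then have "x = smul (c z) z" using B(2) by (simp add: smul_def)
      then show ?thesis by blast
    qed
  qed
next
  show "range (\<lambda>c. smul c z) \<subseteq> span_sr {z}"
  proof
    fix x assume "x \<in> range (\<lambda>c. smul c z)"
    then obtain c where "x = smul c z" by blast
    then have "x = (\<lambda>i. \<Sum>b\<in>{z}. (\<lambda>_. c) b * b i)" by (simp add: smul_def)
    then show "x \<in> span_sr {z}" by (rule span_intro[rotated 2]) auto
  qed
qed

lemma span_pair:
  assumes "x \<noteq> y"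
  shows "span_sr {x, y} = {vadd (smul p x) (smul q y) | p q. True}"
proof
  show "span_sr {x, y} \<subseteq> {vadd (smul p x) (smul q y) | p q. True}"
  proof
    fix v assume "v \<in> span_sr {x, y}"
    then obtain B c where B: "B \<subseteq> {x, y}" "v = (\<lambda>i. \<Sum>b\<in>B. c b * b i)"
      unfolding span_sr_def by blast
    have "v = vadd (smul (if x \<in> B then c x else 0) x) (smul (if y \<in> B then c y else 0) y)"
    proof
      fix i
      have "(\<Sum>b\<in>B. c b * b i) = (\<Sum>b\<in>{x,y} \<inter> B. c b * b i)"
        using B(1) by (simp add: Int_absorb1)
      also have "\<dots> = (\<Sum>b\<in>{x,y}. if b \<in> B then c b * b i else 0)"
        by (rule sum.inter_restrict) simp
      also have "\<dots> = vadd (smul (if x \<in> B then c x else 0) x) (smul (if y \<in> B then c y else 0) y) i"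
        using assms by (simp add: vadd_def smul_def)
      finally show "v i = vadd (smul (if x \<in> B then c x else 0) x) (smul (if y \<in> B then c y else 0) y) i"
        using B(2) by simp
    qed
    then show "v \<in> {vadd (smul p x) (smul q y) | p q. True}" by blast
  qed
next
  show "{vadd (smul p x) (smul q y) | p q. True} \<subseteq> span_sr {x, y}"
  proof
    fix v assume "v \<in> {vadd (smul p x) (smul q y) | p q. True}"
    then obtain p q where v: "v = vadd (smul p x) (smul q y)" by blast
    have "v = (\<lambda>i. \<Sum>b\<in>{x,y}. (\<lambda>b. if b = x then p else q) b * b i)"
      using assms v by (simp add: vadd_def smul_def)
    then show "v \<in> span_sr {x, y}" by (rule span_intro[rotated 2]) auto
  qed
qed

lemma dim_zero: "dim_sr {\<lambda>i::'i. 0::'a::{comm_semiring_0, comm_monoid_mult}} = 0"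
proof -
  have "(\<exists>B. basis_sr B {\<lambda>i::'i. 0::'a} \<and> finite B \<and> card B = n) \<longleftrightarrow> n = 0" for n
  proof
    assume "\<exists>B. basis_sr B {\<lambda>i::'i. 0::'a} \<and> finite B \<and> card B = n"
    then obtain B where B: "basis_sr B {\<lambda>i::'i. 0::'a}" "card B = n" by blast
    have "B = {}"
    proof (rule ccontr)
      assume "B \<noteq> {}"
      then have "(\<lambda>i::'i. 0::'a) \<in> B" using B unfolding basis_sr_def by blast
      moreover have "(\<lambda>i::'i. 0::'a) \<in> span_sr (B - {\<lambda>i::'i. 0})" by (rule span_zero)
      ultimately show False using B unfolding basis_sr_def lin_indep_sr_def by blast
    qed
    then show "n = 0" using B by simp
  next
    assume "n = 0"
    have "basis_sr {} {\<lambda>i::'i. 0::'a}" unfolding basis_sr_def lin_indep_sr_def span_empty by simp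
    then show "\<exists>B. basis_sr B {\<lambda>i::'i. 0::'a} \<and> finite B \<and> card B = n" using \<open>n = 0\<close> by force
  qed
  then show ?thesis unfolding dim_sr_def by simp
qed

lemma nz_coord: "(z::'i \<Rightarrow> 'a::zero) \<noteq> (\<lambda>i. 0) \<Longrightarrow> \<exists>i. z i \<noteq> 0"
  by auto

lemma dim_single:
  assumes st: "standing_semiring TYPE('a::{comm_semiring_0, comm_monoid_mult})"
    and z: "(z::'i \<Rightarrow> 'a) \<noteq> (\<lambda>i. 0)"
  shows "dim_sr (span_sr {z}) = 1"
proof -
  obtain i0 where i0: "z i0 \<noteq> 0" using nz_coord[OF z] by blast
  have n01: "(0::'a) \<noteq> 1"
  proof
    assume "(0::'a) = 1"
    then have "z i0 = 0 * z i0" by (metis mult_1)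
    then show False using i0 by simp
  qed
  have "(\<exists>B. basis_sr B (span_sr {z}) \<and> finite B \<and> card B = n) \<longleftrightarrow> n = 1" for n
  proof
    assume "\<exists>B. basis_sr B (span_sr {z}) \<and> finite B \<and> card B = n"
    then obtain B where B: "basis_sr B (span_sr {z})" "finite B" "card B = n" by blast
    have Bsub: "B \<subseteq> range (\<lambda>c. smul c z)" using B(1) span_single unfolding basis_sr_def by metis
    then have "\<forall>b\<in>B. \<exists>c. b = smul c z" by blast
    then obtain d where d: "\<And>b. b \<in> B \<Longrightarrow> b = smul (d b) z" by metis
    have "z \<in> span_sr B" using B(1) span_single unfolding basis_sr_def by (metis rangeI smul1)
    then obtain F c where F: "finite F" "F \<subseteq> B" "z = (\<lambda>i. \<Sum>b\<in>F. c b * b i)"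
      unfolding span_sr_def by blast
    have "z i0 = (\<Sum>b\<in>F. c b * b i0)" using F(3) by (rule fun_cong)
    also have "\<dots> = (\<Sum>b\<in>F. c b * (d b * z i0))"
    proof (rule sum.cong[OF refl])
      fix b assume "b \<in> F"
      then have "b = smul (d b) z" using d F(2) by blast
      then have "b i0 = smul (d b) z i0" by (rule fun_cong)
      then show "c b * b i0 = c b * (d b * z i0)" by (simp add: smul_def)
    qed
    also have "\<dots> = (\<Sum>b\<in>F. c b * d b) * z i0"
      by (simp add: sum_distrib_right mult.assoc)
    finally have "1 * z i0 = (\<Sum>b\<in>F. c b * d b) * z i0" by simp
    then have "(\<Sum>b\<in>F. c b * d b) = 1" using canc[OF st i0] by metis
    then have "is_unit_sr (\<Sum>b\<in>F. c b * d b)" unfolding is_unit_sr_def by (metis mult_1_right)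
    then obtain b where b: "b \<in> F" "is_unit_sr (c b * d b)" using unit_sum[OF st n01 F(1)] by blast
    then obtain e where e: "c b * d b * e = 1" unfolding is_unit_sr_def by blast
    have bB: "b \<in> B" using b F by blast
    have u: "(c b * e) * d b = 1" using e by (simp add: ac_simps)
    have zb: "z = smul (c b * e) b"
    proof
      fix x
      have "b x = smul (d b) z x" using d[OF bB] by (rule fun_cong)
      then have "smul (c b * e) b x = (c b * e) * (d b * z x)" by (simp add: smul_def)
      also have "\<dots> = ((c b * e) * d b) * z x" by (simp add: mult.assoc)
      also have "\<dots> = z x" using u by simp
      finally show "z x = smul (c b * e) b x" by simp
    qed
    have "B \<subseteq> {b}"
    proof
      fix b' assume b': "b' \<in> B"
      show "b' \<in> {b}"
      proof (rule ccontr)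
        assume "b' \<notin> {b}"
        then have "b \<in> B - {b'}" using bB by blast
        then have "span_sr {b} \<subseteq> span_sr (B - {b'})" unfolding span_sr_def by blast
        moreover have "b' = smul (d b' * (c b * e)) b"
          using d[OF b'] zb by (simp add: smul_def fun_eq_iff mult.assoc)
        ultimately have "b' \<in> span_sr (B - {b'})" using span_single by blast
        then show False using B(1) b' unfolding basis_sr_def lin_indep_sr_def by blast
      qed
    qed
    then have "B = {b}" using bB by blast
    then show "n = 1" using B by simp
  next
    assume "n = 1"
    have "z \<in> span_sr {z}" using span_single by (metis rangeI smul1)
    moreover have "lin_indep_sr {z}" unfolding lin_indep_sr_def using z by (simp add: span_empty)
    ultimately have "basis_sr {z} (span_sr {z})" unfolding basis_sr_def by simp
    then show "\<exists>B. basis_sr B (span_sr {z}) \<and> finite B \<and> card B = n" using \<open>n = 1\<close> by force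
  qed
  then show ?thesis unfolding dim_sr_def by simp
qed

theorem lemma2p8:
  fixes V :: "('i::finite \<Rightarrow> 'a::{comm_semiring_0, comm_monoid_mult}) set"
    and W :: "('j::finite \<Rightarrow> 'a) set"
    and T :: "('i \<Rightarrow> 'a) \<Rightarrow> ('j \<Rightarrow> 'a)"
  assumes "standing_semiring TYPE('a)"
    and "semimodule V" and "fin_gen V"
    and "semimodule W" and "fin_gen W"
    and "linear_sr V W T"
    and "T ` V = W"
  shows "(inj_on T V \<and> T ` V = W) \<longleftrightarrow>
         (\<forall>U. semimodule U \<and> fin_gen U \<and> U \<subseteq> V \<longrightarrow> dim_sr (T ` U) = dim_sr U)"
proof -
  note st = assms(1)
  interpret L: linT V W T using assms(2,6) by (unfold_locales)
  have smV: "\<And>c x. x \<in> V \<Longrightarrow> smul c x \<in> V" and addV: "\<And>x y. x \<in> V \<Longrightarrow> y \<in> V \<Longrightarrow> vadd x y \<in> V"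
    using assms(2) unfolding semimodule_def by auto
  show ?thesis
  proof
    assume "inj_on T V \<and> T ` V = W"
    then show "\<forall>U. semimodule U \<and> fin_gen U \<and> U \<subseteq> V \<longrightarrow> dim_sr (T ` U) = dim_sr U"
      using L.dim_image by blast
  next
    assume H: "\<forall>U. semimodule U \<and> fin_gen U \<and> U \<subseteq> V \<longrightarrow> dim_sr (T ` U) = dim_sr U"
    have "inj_on T V"
    proof (rule inj_onI, rule ccontr)
      fix x y assume xV: "x \<in> V" and yV: "y \<in> V" and Txy: "T x = T y" and xy: "x \<noteq> y"
      show False
      proof (cases "T x = (\<lambda>i. 0)")
        case True
        define z where "z = (if x = (\<lambda>i. 0) then y else x)"
        have z0: "z \<noteq> (\<lambda>i. 0)" using xy z_def by auto
        have zV: "z \<in> V" using xV yV z_def by auto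
        have Tz: "T z = (\<lambda>i. 0)" using True Txy z_def by auto
        define U where "U = span_sr {z}"
        have U: "U = range (\<lambda>c. smul c z)" using U_def span_single by blast
        have "semimodule U" unfolding semimodule_def U
        proof (intro conjI ballI allI)
          show "range (\<lambda>c. smul c z) \<noteq> {}" by blast
        next
          fix u v assume "u \<in> range (\<lambda>c. smul c z)" "v \<in> range (\<lambda>c. smul c z)"
          then obtain a b where "u = smul a z" "v = smul b z" by blast
          then have "vadd u v = smul (a + b) z" by (simp add: vadd_def smul_def fun_eq_iff distrib_right)
          then show "vadd u v \<in> range (\<lambda>c. smul c z)" by blast
        next
          fix c u assume "u \<in> range (\<lambda>c. smul c z)"
          then obtain a where "u = smul a z" by blast
          then have "smul c u = smul (c * a) z" by (simp add: smul_def fun_eq_iff mult.assoc)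
          then show "smul c u \<in> range (\<lambda>c. smul c z)" by blast
        qed
        moreover have zU: "z \<in> U" unfolding U using smul1[of z] by (metis rangeI)
        moreover have "fin_gen U" unfolding fin_gen_def
          using zU U_def by (intro exI[of _ "{z}"]) auto
        moreover have "U \<subseteq> V" using U smV zV by auto
        ultimately have "dim_sr (T ` U) = dim_sr U" using H by blast
        moreover have "T ` U = {\<lambda>i. 0}"
        proof -
          have TU0: "\<forall>u\<in>U. T u = (\<lambda>i. 0)" unfolding U using L.Tsmul[OF zV] Tz
            by (auto simp: smul_def)
          then show ?thesis using zU by (auto intro: image_eqI[of _ T z])
        qed
        ultimately have "dim_sr U = 0" using dim_zero by metis
        then show False using dim_single[OF st z0] U_def by simp
      next
        case False
        have x0: "x \<noteq> (\<lambda>i. 0)" using False L.T0 by auto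
        have y0: "y \<noteq> (\<lambda>i. 0)" using False L.T0 Txy by auto
        obtain j where j: "T x j \<noteq> 0" using nz_coord[OF False] by blast
        have nomult: "u = v"
          if "u \<in> V" "v \<in> V" "T u = T x" "T v = T x" "v = smul c u" for u v c
        proof -
          have "T x = smul c (T x)" using that L.Tsmul by metis
          then have "1 * T x j = c * T x j" by (metis mult_1 smul_def)
          then have "c = 1" using canc[OF st j] by metis
          then show ?thesis using that smul1 by metis
        qed
        define U where "U = span_sr {x, y}"
        have U: "U = {vadd (smul p x) (smul q y) | p q. True}" using U_def span_pair[OF xy] by blast
        have "semimodule U" unfolding semimodule_def U
        proof (intro conjI ballI allI)
          show "{vadd (smul p x) (smul q y) |p q. True} \<noteq> {}" by blast
        next
          fix u v assume "u \<in> {vadd (smul p x) (smul q y) |p q. True}" "v \<in> {vadd (smul p x) (smul q y) |p q. True}"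
          then obtain p q p' q' where "u = vadd (smul p x) (smul q y)" "v = vadd (smul p' x) (smul q' y)" by blast
          then have "vadd u v = vadd (smul (p + p') x) (smul (q + q') y)"
            by (simp add: vadd_def smul_def fun_eq_iff algebra_simps)
          then show "vadd u v \<in> {vadd (smul p x) (smul q y) |p q. True}" by blast
        next
          fix c u assume "u \<in> {vadd (smul p x) (smul q y) |p q. True}"
          then obtain p q where "u = vadd (smul p x) (smul q y)" by blast
          then have "smul c u = vadd (smul (c * p) x) (smul (c * q) y)"
            by (simp add: vadd_def smul_def fun_eq_iff algebra_simps)
          then show "smul c u \<in> {vadd (smul p x) (smul q y) |p q. True}" by blast
        qed
        moreover have xU: "x \<in> U" unfolding U
          by (rule CollectI, rule exI[of _ 1], rule exI[of _ 0]) (simp add: vadd_def smul_def)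
        moreover have yU: "y \<in> U" unfolding U
          by (rule CollectI, rule exI[of _ 0], rule exI[of _ 1]) (simp add: vadd_def smul_def)
        ultimately have "fin_gen U" unfolding fin_gen_def using U_def by (intro exI[of _ "{x,y}"]) auto
        moreover have "U \<subseteq> V" using U smV addV xV yV by auto
        ultimately have "dim_sr (T ` U) = dim_sr U" using H \<open>semimodule U\<close> by blast
        moreover have "T ` U = span_sr {T x}"
        proof
          show "T ` U \<subseteq> span_sr {T x}"
          proof
            fix w assume "w \<in> T ` U"
            then obtain p q where "w = T (vadd (smul p x) (smul q y))" unfolding U by blast
            then have "w = smul (p + q) (T x)"
              using L.Tadd L.Tsmul smV xV yV Txy by (simp add: vadd_def smul_def fun_eq_iff distrib_right)
            then show "w \<in> span_sr {T x}" using span_single by blast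
          qed
        next
          show "span_sr {T x} \<subseteq> T ` U"
          proof
            fix w assume "w \<in> span_sr {T x}"
            then obtain c where "w = smul c (T x)" using span_single by blast
            then have "w = T (vadd (smul c x) (smul 0 y))"
              using L.Tadd L.Tsmul smV xV yV Txy by (simp add: vadd_def smul_def fun_eq_iff)
            then show "w \<in> T ` U" unfolding U by blast
          qed
        qed
        ultimately have dimU: "dim_sr U = 1" using dim_single[OF st False] by simp
        have notone: "card B \<noteq> 1" if B: "basis_sr B U" for B
        proof
          assume "card B = 1"
          then obtain w where w: "B = {w}" by (meson card_1_singletonE)
          have spw: "U = range (\<lambda>c. smul c w)" using B w span_single unfolding basis_sr_def by metis
          obtain a where a: "x = smul a w" using xU spw by blast
          obtain b where b: "y = smul b w" using yU spw by blast
          have w0: "w \<noteq> (\<lambda>i. 0)" using a x0 by (auto simp: smul_def)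
          obtain i0 where i0: "w i0 \<noteq> 0" using nz_coord[OF w0] by blast
          have "w \<in> U" using B w unfolding basis_sr_def by blast
          then obtain p q where wpq: "w = vadd (smul p x) (smul q y)" unfolding U by blast
          have "w i0 = vadd (smul p x) (smul q y) i0" using wpq by (rule fun_cong)
          then have "w i0 = p * (a * w i0) + q * (b * w i0)" using a b
            by (simp add: vadd_def smul_def)
          then have "w i0 = (p * a + q * b) * w i0" by (simp add: algebra_simps)
          then have "1 * w i0 = (p * a + q * b) * w i0" by simp
          then have "p * a + q * b = 1" using canc[OF st i0] by metis
          then have "is_unit_sr (p * a + q * b)" unfolding is_unit_sr_def by (metis mult_1_right)
          then have "is_unit_sr (p * a) \<or> is_unit_sr (q * b)" using st unfolding standing_semiring_def by blast
          then show False
          proof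
            assume "is_unit_sr (p * a)"
            then obtain e where e: "p * a * e = 1" unfolding is_unit_sr_def by blast
            have "y = smul (b * p * e) x" using a b e
              by (simp add: smul_def fun_eq_iff) (metis mult.assoc mult.commute mult_1)
            then show False using nomult[OF xV yV refl Txy[symmetric]] xy by metis
          next
            assume "is_unit_sr (q * b)"
            then obtain e where e: "q * b * e = 1" unfolding is_unit_sr_def by blast
            have "x = smul (a * q * e) y" using a b e
              by (simp add: smul_def fun_eq_iff) (metis mult.assoc mult.commute mult_1)
            then show False using nomult[OF yV xV Txy[symmetric] refl] xy by metis
          qed
        qed
        have "basis_sr {x, y} U"
        proof -
          have "x \<notin> span_sr {y}"
          proof
            assume "x \<in> span_sr {y}"
            then obtain c where "x = smul c y" using span_single by blast
            then show False using nomult[OF yV xV Txy[symmetric] refl] xy by metis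
          qed
          moreover have "y \<notin> span_sr {x}"
          proof
            assume "y \<in> span_sr {x}"
            then obtain c where "y = smul c x" using span_single by blast
            then show False using nomult[OF xV yV refl Txy[symmetric]] xy by metis
          qed
          ultimately have "lin_indep_sr {x, y}" unfolding lin_indep_sr_def using xy
            by (auto simp: insert_Diff_if)
          then show ?thesis unfolding basis_sr_def using xU yU U_def by blast
        qed
        then have ex: "\<exists>n. \<exists>B. basis_sr B U \<and> finite B \<and> card B = n" by blast
        have "\<exists>B. basis_sr B U \<and> finite B \<and> card B = dim_sr U"
          unfolding dim_sr_def by (rule someI_ex[OF ex])
        then obtain B where "basis_sr B U" "card B = dim_sr U" by blast
        then show False using notone[of B] dimU by simp
      qed
    qed
    then show "inj_on T V \<and> T ` V = W" using assms(7) by blast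
  qed
qed

end
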